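(* If $G$ is a graph with minimum degree $\delta=\delta(G)\ge 1$ and maximum degree $\Delta=\Delta(G)\ge 4\lceil\delta/2\rceil-3$, then $$\mathrm{DC}(G)\le \Big\lceil\tfrac{\delta}{2}\Big\rceil\Big(\Delta-2\Big\lceil\tfrac{\delta}{2}\Big\rceil+2\Big)+1+\Big\lfloor\tfrac{\delta}{2}\Big\rfloor.$$ Moreover, the bound is sharp: for every odd $\delta\ge 3$ there exist graphs with minimum degree $\delta$ satisfying the hypothesis and attaining equality.
   Context: All graphs are finite, simple and connected. $N[v]=N(v)\cup\{v\}$ denotes the closed neighborhood of $v$. For a graph $G$ with $\delta(G)\ge 1$, a set $S\subseteq V(G)$ is a double dominating set if $|N[v]\cap S|\ge 2$ for every $v\in V(G)$. Two disjoint sets $U,W\subseteq V(G)$ form a double coalition if neither is a double dominating set but $U\cup W$ is. A double coalition partition of $G$ is a partition $\Omega$ of $V(G)$ in which every set forms a double coalition with some other set of $\Omega$. The double coalition number $\mathrm{DC}(G)$ is the maximum cardinality of a double coalition partition of $G$. *)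

theory Defs
  imports Main
begin

definition graph :: "'a set \<Rightarrow> ('a \<Rightarrow> 'a \<Rightarrow> bool) \<Rightarrow> bool" where
  "graph V E \<longleftrightarrow> finite V \<and> V \<noteq> {} \<and>
     (\<forall>x y. E x y \<longrightarrow> x \<in> V \<and> y \<in> V) \<and>
     (\<forall>x y. E x y \<longrightarrow> E y x) \<and> (\<forall>x. \<not> E x x) \<and>
     (\<forall>x\<in>V. \<forall>y\<in>V. E\<^sup>*\<^sup>* x y)"

definition nbhd :: "'a set \<Rightarrow> ('a \<Rightarrow> 'a \<Rightarrow> bool) \<Rightarrow> 'a \<Rightarrow> 'a set" where
  "nbhd V E v = {u \<in> V. E v u}"

definition cnbhd :: "'a set \<Rightarrow> ('a \<Rightarrow> 'a \<Rightarrow> bool) \<Rightarrow> 'a \<Rightarrow> 'a set" where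
  "cnbhd V E v = insert v (nbhd V E v)"

definition degree :: "'a set \<Rightarrow> ('a \<Rightarrow> 'a \<Rightarrow> bool) \<Rightarrow> 'a \<Rightarrow> nat" where
  "degree V E v = card (nbhd V E v)"

definition min_deg :: "'a set \<Rightarrow> ('a \<Rightarrow> 'a \<Rightarrow> bool) \<Rightarrow> nat" where
  "min_deg V E = Min (degree V E ` V)"

definition max_deg :: "'a set \<Rightarrow> ('a \<Rightarrow> 'a \<Rightarrow> bool) \<Rightarrow> nat" where
  "max_deg V E = Max (degree V E ` V)"

definition double_dominating :: "'a set \<Rightarrow> ('a \<Rightarrow> 'a \<Rightarrow> bool) \<Rightarrow> 'a set \<Rightarrow> bool" where
  "double_dominating V E S \<longleftrightarrow> S \<subseteq> V \<and> (\<forall>v\<in>V. card (cnbhd V E v \<inter> S) \<ge> 2)"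

definition double_coalition :: "'a set \<Rightarrow> ('a \<Rightarrow> 'a \<Rightarrow> bool) \<Rightarrow> 'a set \<Rightarrow> 'a set \<Rightarrow> bool" where
  "double_coalition V E U W \<longleftrightarrow> U \<inter> W = {} \<and>
     \<not> double_dominating V E U \<and> \<not> double_dominating V E W \<and>
     double_dominating V E (U \<union> W)"

definition dc_partition :: "'a set \<Rightarrow> ('a \<Rightarrow> 'a \<Rightarrow> bool) \<Rightarrow> 'a set set \<Rightarrow> bool" where
  "dc_partition V E P \<longleftrightarrow> \<Union>P = V \<and> {} \<notin> P \<and>
     (\<forall>A\<in>P. \<forall>B\<in>P. A \<noteq> B \<longrightarrow> A \<inter> B = {}) \<and>
     (\<forall>A\<in>P. \<exists>B\<in>P. B \<noteq> A \<and> double_coalition V E A B)"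

text \<open>Double coalition number: maximum cardinality of a double coalition partition
  (Sup on nat; 0 if none exists).\<close>
definition DC :: "'a set \<Rightarrow> ('a \<Rightarrow> 'a \<Rightarrow> bool) \<Rightarrow> nat" where
  "DC V E = Sup {card P | P. dc_partition V E P}"

text \<open>ceil(d/2) = (d+1) div 2, floor(d/2) = d div 2; the bound
  ceil(d/2)(D - 2 ceil(d/2) + 2) + 1 + floor(d/2).\<close>
definition dc_bound :: "nat \<Rightarrow> nat \<Rightarrow> nat" where
  "dc_bound d D = ((d + 1) div 2) * (D + 2 - 2 * ((d + 1) div 2)) + 1 + d div 2"

end

theory Submission
  imports Defs "HOL-Library.Countable"
begin


lemma two_le_cardI:
  assumes "finite S" "a \<in> S" "b \<in> S" "a \<noteq> b"
  shows "2 \<le> card S"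
proof -
  have "{a,b} \<subseteq> S" using assms by auto
  hence "card {a,b} \<le> card S" using assms(1) card_mono by blast
  thus ?thesis using assms(4) by simp
qed

lemma part1:
  fixes V :: "'a set"
  assumes G: "graph V E"
    and hD: "max_deg V E + 3 \<ge> 4 * ((min_deg V E + 1) div 2)"
    and P: "dc_partition V E P"
  shows "card P \<le> dc_bound (min_deg V E) (max_deg V E)"
proof -
  define d where "d = min_deg V E"
  define D where "D = max_deg V E"
  define k where "k = (d+1) div 2"
  from G have fin: "finite V" and ne: "V \<noteq> {}"
    and Esub: "\<And>x y. E x y \<Longrightarrow> x\<in>V \<and> y\<in>V" and irr: "\<And>x. \<not> E x x"
    unfolding graph_def by auto
  have degle: "degree V E w \<le> D" if "w\<in>V" for w
    unfolding D_def max_deg_def using fin that by auto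
  obtain v where v: "v\<in>V" "degree V E v = d"
  proof -
    have "min_deg V E \<in> degree V E ` V" unfolding min_deg_def using fin ne by (intro Min_in) auto
    thus ?thesis using that d_def by auto
  qed
  have dD: "d \<le> D" using degle[OF v(1)] v(2) by simp
  have cn_card: "card (cnbhd V E w) = degree V E w + 1" if "w\<in>V" for w
  proof -
    have "w \<notin> nbhd V E w" using irr unfolding nbhd_def by auto
    moreover have "finite (nbhd V E w)" using fin unfolding nbhd_def by auto
    ultimately show ?thesis unfolding cnbhd_def degree_def by simp
  qed
  have cn_sub: "cnbhd V E w \<subseteq> V" if "w\<in>V" for w
    using that unfolding cnbhd_def nbhd_def by auto
  from P have UP: "\<Union>P = V" and neP: "{} \<notin> P"
    and disj: "\<And>A B. A\<in>P \<Longrightarrow> B\<in>P \<Longrightarrow> A \<noteq> B \<Longrightarrow> A \<inter> B = {}"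
    and partner: "\<And>A. A\<in>P \<Longrightarrow> \<exists>B\<in>P. B \<noteq> A \<and> double_coalition V E A B"
    unfolding dc_partition_def by auto
  have finP: "finite P" using fin UP finite_UnionD by blast
  have subV: "B \<subseteq> V" if "B \<in> P" for B using UP that by auto
  have sumcard: "(\<Sum>B\<in>P. card (M \<inter> B)) = card M" if "M \<subseteq> V" for M
  proof -
    have "card (\<Union>B\<in>P. M \<inter> B) = (\<Sum>B\<in>P. card (M \<inter> B))"
      apply (rule card_UN_disjoint[OF finP])
      using fin that finite_subset apply blast
      using disj by blast
    moreover have "(\<Union>B\<in>P. M \<inter> B) = M" using UP that by auto
    ultimately show ?thesis by simp
  qed
  define N where "N = cnbhd V E v"
  have cardN: "card N = d + 1" using cn_card[OF v(1)] v(2) N_def by simp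
  have NV: "N \<subseteq> V" using cn_sub[OF v(1)] N_def by simp
  have finN: "finite N" using NV fin finite_subset by blast
  define Bg where "Bg = {B\<in>P. 2 \<le> card (N\<inter>B)}"
  define Sm where "Sm = {B\<in>P. card (N\<inter>B) = 1}"
  define Ou where "Ou = {B\<in>P. card (N\<inter>B) = 0}"
  have finBg: "finite Bg" "finite Sm" "finite Ou" using finP unfolding Bg_def Sm_def Ou_def by auto
  have cardP: "card P = card Bg + card Sm + card Ou"
  proof -
    have "P = Bg \<union> Sm \<union> Ou" unfolding Bg_def Sm_def Ou_def by auto
    moreover have "Bg \<inter> Sm = {}" "(Bg \<union> Sm) \<inter> Ou = {}" unfolding Bg_def Sm_def Ou_def by auto
    ultimately show ?thesis using finBg by (simp add: card_Un_disjoint)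
  qed
  have BgSm: "2 * card Bg + card Sm \<le> d + 1"
  proof -
    have "(\<Sum>B\<in>Bg. card (N\<inter>B)) + (\<Sum>B\<in>Sm. card (N\<inter>B)) = (\<Sum>B\<in>Bg\<union>Sm. card (N\<inter>B))"
      using finBg by (subst sum.union_disjoint) (auto simp: Bg_def Sm_def)
    also have "\<dots> \<le> (\<Sum>B\<in>P. card (N\<inter>B))"
      by (rule sum_mono2[OF finP]) (auto simp: Bg_def Sm_def)
    also have "\<dots> = d + 1" using sumcard[OF NV] cardN by simp
    finally have "(\<Sum>B\<in>Bg. card (N\<inter>B)) + (\<Sum>B\<in>Sm. card (N\<inter>B)) \<le> d + 1" .
    moreover have "(\<Sum>B\<in>Bg. card (N\<inter>B)) \<ge> (\<Sum>B\<in>Bg. 2)" by (rule sum_mono) (auto simp: Bg_def)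
    moreover have "(\<Sum>B\<in>Sm. card (N\<inter>B)) = (\<Sum>B\<in>Sm. 1)" by (rule sum.cong) (auto simp: Sm_def)
    ultimately show ?thesis by simp
  qed
  have BgOu: "Bg \<inter> Ou = {}" unfolding Bg_def Ou_def by auto
  have ouP: "\<exists>X\<in>Bg. double_coalition V E Q X" if "Q \<in> Ou" for Q
  proof -
    from that have OP: "Q \<in> P" and Q0: "card (N \<inter> Q) = 0" unfolding Ou_def by auto
    have "N \<inter> Q = {}" using Q0 finN by simp
    from partner[OF OP] obtain B where B: "B\<in>P" "double_coalition V E Q B" by blast
    hence "double_dominating V E (Q \<union> B)" unfolding double_coalition_def by auto
    hence "2 \<le> card (cnbhd V E v \<inter> (Q \<union> B))" using v(1) unfolding double_dominating_def by auto
    moreover have "cnbhd V E v \<inter> (Q \<union> B) = N \<inter> B" using \<open>N \<inter> Q = {}\<close> N_def by auto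
    ultimately show ?thesis using B unfolding Bg_def by auto
  qed
  define pi where "pi Q = (SOME X. X\<in>Bg \<and> double_coalition V E Q X)" for Q
  have pi: "pi Q \<in> Bg \<and> double_coalition V E Q (pi Q)" if "Q\<in>Ou" for Q
    unfolding pi_def using someI_ex[of "\<lambda>X. X\<in>Bg \<and> double_coalition V E Q X"] ouP[OF that] by blast
  define A where "A = pi ` Ou"
  define fib where "fib X = {Q\<in>Ou. pi Q = X}" for X
  have ABg: "A \<subseteq> Bg" using pi A_def by auto
  have finA: "finite A" using finBg A_def by auto
  have finfib: "finite (fib X)" for X using finBg unfolding fib_def by auto
  have cardOu: "card Ou = (\<Sum>X\<in>A. card (fib X))"
  proof -
    have "Ou = (\<Union>X\<in>A. fib X)" unfolding A_def fib_def by auto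
    moreover have "card (\<Union>X\<in>A. fib X) = (\<Sum>X\<in>A. card (fib X))"
      by (rule card_UN_disjoint[OF finA]) (use finfib in \<open>auto simp: fib_def\<close>)
    ultimately show ?thesis by simp
  qed
  have key: "card (fib X) + 2 * card A \<le> D + 2" if XA: "X \<in> A" for X
  proof -
    obtain Q0 where Q0: "Q0 \<in> Ou" "X = pi Q0" using XA A_def by auto
    have XBg: "X \<in> Bg" using pi[OF Q0(1)] Q0(2) by simp
    have XP: "X \<in> P" using XBg Bg_def by simp
    have "\<not> double_dominating V E X" using pi[OF Q0(1)] Q0(2) unfolding double_coalition_def by simp
    then obtain w where w: "w \<in> V" "card (cnbhd V E w \<inter> X) < 2"
      using subV[OF XP] unfolding double_dominating_def by auto
    define M where "M = cnbhd V E w"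
    have MV: "M \<subseteq> V" using cn_sub[OF w(1)] M_def by simp
    have finM: "finite M" using MV fin finite_subset by blast
    define f where "f B = card (M \<inter> B)" for B
    have fX: "f X \<le> 1" using w(2) unfolding f_def M_def by simp
    have pairf: "2 \<le> f B1 + f B2" if "double_coalition V E B1 B2" for B1 B2
    proof -
      from that have "B1 \<inter> B2 = {}" "double_dominating V E (B1 \<union> B2)" unfolding double_coalition_def by auto
      hence "2 \<le> card (M \<inter> (B1 \<union> B2))" using w(1) unfolding double_dominating_def M_def by auto
      moreover have "M \<inter> (B1 \<union> B2) = (M \<inter> B1) \<union> (M \<inter> B2)" by auto
      moreover have "card ((M \<inter> B1) \<union> (M \<inter> B2)) = f B1 + f B2"
        unfolding f_def using finM \<open>B1 \<inter> B2 = {}\<close> by (subst card_Un_disjoint) auto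
      ultimately show ?thesis by simp
    qed
    define T where "T X' = insert X' (fib X')" for X'
    have notin: "X' \<notin> fib X'" if "X' \<in> A" for X'
      using that ABg BgOu unfolding fib_def by auto
    have sumT: "(\<Sum>B\<in>T X'. f B) = f X' + (\<Sum>B\<in>fib X'. f B)" if "X' \<in> A" for X'
      unfolding T_def using notin[OF that] finfib by simp
    have h2: "2 \<le> (\<Sum>B\<in>T X'. f B)" if X'A: "X' \<in> A" for X'
    proof -
      obtain Q where Q: "Q \<in> Ou" "X' = pi Q" using X'A A_def by auto
      have Of: "Q \<in> fib X'" using Q fib_def by auto
      have "f Q \<le> (\<Sum>B\<in>fib X'. f B)" using Of finfib by (intro member_le_sum) auto
      moreover have "2 \<le> f Q + f X'" using pairf pi[OF Q(1)] Q(2) by simp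
      ultimately show ?thesis using sumT[OF X'A] by simp
    qed
    have hX: "card (fib X) + 1 \<le> (\<Sum>B\<in>T X. f B)"
    proof -
      have fibne: "fib X \<noteq> {}" using Q0 fib_def by auto
      have each: "2 - f X \<le> f Q" if "Q \<in> fib X" for Q
      proof -
        from that have "Q \<in> Ou" "pi Q = X" unfolding fib_def by auto
        hence "2 \<le> f Q + f X" using pairf pi by metis
        thus ?thesis by simp
      qed
      have "(\<Sum>B\<in>fib X. (2 - f X)) \<le> (\<Sum>B\<in>fib X. f B)" by (rule sum_mono) (rule each)
      hence s: "card (fib X) * (2 - f X) \<le> (\<Sum>B\<in>fib X. f B)" by simp
      have c1: "card (fib X) \<ge> 1" using fibne finfib by (simp add: Suc_leI card_gt_0_iff)
      have "card (fib X) + 1 \<le> f X + card (fib X) * (2 - f X)"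
      proof (cases "f X = 0")
        case True thus ?thesis using c1 by simp
      next
        case False hence "f X = 1" using fX by simp
        thus ?thesis by simp
      qed
      thus ?thesis using s sumT[OF XA] by simp
    qed
    have "(\<Sum>X'\<in>A. \<Sum>B\<in>T X'. f B) = (\<Sum>B\<in>(\<Union>X'\<in>A. T X'). f B)"
      apply (rule sum.UNION_disjoint[symmetric, OF finA])
      using finfib T_def apply simp
      unfolding T_def fib_def using ABg BgOu by blast
    also have "\<dots> \<le> (\<Sum>B\<in>P. f B)"
      apply (rule sum_mono2[OF finP])
      unfolding T_def fib_def using ABg Bg_def Ou_def by auto
    also have "\<dots> = card M" unfolding f_def using sumcard[OF MV] .
    also have "\<dots> \<le> D + 1" using cn_card[OF w(1)] degle[OF w(1)] M_def by simp
    finally have tot: "(\<Sum>X'\<in>A. \<Sum>B\<in>T X'. f B) \<le> D + 1" .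
    have "(\<Sum>X'\<in>A. \<Sum>B\<in>T X'. f B) = (\<Sum>B\<in>T X. f B) + (\<Sum>X'\<in>A-{X}. \<Sum>B\<in>T X'. f B)"
      using finA XA by (simp add: sum.remove)
    moreover have "(\<Sum>X'\<in>A-{X}. \<Sum>B\<in>T X'. f B) \<ge> (\<Sum>X'\<in>A-{X}. 2)"
      by (rule sum_mono) (use h2 in auto)
    moreover have "card (A - {X}) + 1 = card A" using finA XA
      by (metis card_Diff1_le card_Suc_Diff1 Suc_eq_plus1)
    ultimately show ?thesis using tot hX by simp
  qed
  have OuA: "card Ou \<le> card A * (D + 2 - 2 * card A)"
  proof -
    have "(\<Sum>X\<in>A. card (fib X)) \<le> (\<Sum>X\<in>A. D + 2 - 2 * card A)"
      by (rule sum_mono) (use key in fastforce)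
    thus ?thesis using cardOu by simp
  qed
  have AB: "card A \<le> card Bg" using ABg finBg card_mono by blast
  have Dd: "d \<le> D" by (rule dD)
  have hk: "D + 3 \<ge> 4 * k" using hD unfolding D_def d_def k_def .
  have keyA: "A \<noteq> {} \<Longrightarrow> 2 * card A \<le> D + 2" using key by fastforce
  show ?thesis
  proof -
    define a where "a = card A"
    define b where "b = card Bg"
    have ab: "a \<le> b" using AB a_def b_def by simp
    have bk: "2 * b \<le> d + 1" using BgSm b_def by simp
    have "card P \<le> (d + 1 - b) + a * (D + 2 - 2 * a)"
      using cardP BgSm OuA a_def b_def by simp
    moreover have "(d + 1 - b) + a * (D + 2 - 2 * a) \<le> k * (D + 2 - 2 * k) + 1 + d div 2"
    proof -
      have k2: "2 * k = d + 1 \<or> 2 * k = d" unfolding k_def by presburger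
      have ak: "a \<le> k" using ab bk unfolding k_def by presburger
      have a2: "2 * a \<le> D + 2" using ak hk dD k2 by arith
      have k2b: "2 * k \<le> D + 2" using hk dD k2 by arith
      have ddiv: "d div 2 + k = d" using k2 unfolding k_def by presburger
      have i1: "int (a * (D + 2 - 2 * a)) = int a * (int D + 2 - 2 * int a)" using a2 by (simp add: of_nat_diff)
      have i2: "int (k * (D + 2 - 2 * k)) = int k * (int D + 2 - 2 * int k)" using k2b by (simp add: of_nat_diff)
      have fac: "int k * (int D + 2 - 2 * int k) - (int k - int a) - int a * (int D + 2 - 2 * int a)
                 = (int k - int a) * (int D + 1 - 2 * int k - 2 * int a)" by (simp add: algebra_simps)
      have nn: "(int k - int a) * (int D + 1 - 2 * int k - 2 * int a) \<ge> 0"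
      proof (cases "a = k")
        case True thus ?thesis by simp
      next
        case False hence "a + 1 \<le> k" using ak by simp
        thus ?thesis using hk by (intro mult_nonneg_nonneg) auto
      qed
      have e1: "int (d + 1 - b) = int d + 1 - int b" using bk by linarith
      have e2: "int (d div 2) = int d - int k" using ddiv by linarith
      have "int (d + 1 - b) + int (a * (D + 2 - 2 * a)) \<le> int (k * (D + 2 - 2 * k)) + 1 + int (d div 2)"
        unfolding e1 e2 i1 i2 using fac nn ab by linarith
      thus ?thesis by linarith
    qed
    ultimately show ?thesis unfolding dc_bound_def d_def D_def k_def by simp
  qed
qed



lemma DC_le:
  assumes "\<And>P. dc_partition V E P \<Longrightarrow> card P \<le> b"
  shows "DC V E \<le> b"
  unfolding DC_def
proof (cases "{card P |P. dc_partition V E P} = {}")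
  case True thus "Sup {card P |P. dc_partition V E P} \<le> b" by simp
next
  case False thus "Sup {card P |P. dc_partition V E P} \<le> b"
    by (intro cSup_least) (use assms in auto)
qed

lemma DC_ge:
  assumes "finite V" "dc_partition V E P"
  shows "card P \<le> DC V E"
  unfolding DC_def
proof (rule cSup_upper)
  show "card P \<in> {card P |P. dc_partition V E P}" using assms by auto
  have "{card P |P. dc_partition V E P} \<subseteq> card ` Pow (Pow V)"
    unfolding dc_partition_def by auto
  moreover have "finite (card ` Pow (Pow V))" using assms by simp
  ultimately show "bdd_above {card P |P. dc_partition V E P}"
    by (meson bdd_above_finite finite_subset)
qed

definition mapE :: "('a \<Rightarrow> 'b) \<Rightarrow> ('a \<Rightarrow> 'a \<Rightarrow> bool) \<Rightarrow> 'b \<Rightarrow> 'b \<Rightarrow> bool" where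
  "mapE f E x y = (\<exists>a b. x = f a \<and> y = f b \<and> E a b)"

lemma mapE_f: "inj f \<Longrightarrow> mapE f E (f a) (f b) = E a b"
  unfolding mapE_def by (auto dest: injD)

lemma nbhd_map:
  assumes "inj f" shows "nbhd (f ` V) (mapE f E) (f a) = f ` nbhd V E a"
  unfolding nbhd_def using mapE_f[OF assms] by auto

lemma cnbhd_map:
  assumes "inj f" shows "cnbhd (f ` V) (mapE f E) (f a) = f ` cnbhd V E a"
  unfolding cnbhd_def using nbhd_map[OF assms] by auto

lemma degree_map:
  assumes "inj f" shows "degree (f ` V) (mapE f E) (f a) = degree V E a"
  unfolding degree_def nbhd_map[OF assms] using assms
  by (simp add: card_image inj_on_subset)

lemma degimg_map:
  assumes "inj f" shows "degree (f ` V) (mapE f E) ` (f ` V) = degree V E ` V"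
  using degree_map[OF assms] by (auto simp: image_image)

lemma min_deg_map: "inj f \<Longrightarrow> min_deg (f ` V) (mapE f E) = min_deg V E"
  unfolding min_deg_def using degimg_map by metis

lemma max_deg_map: "inj f \<Longrightarrow> max_deg (f ` V) (mapE f E) = max_deg V E"
  unfolding max_deg_def using degimg_map by metis

lemma dd_map:
  assumes "inj f" "S \<subseteq> V"
  shows "double_dominating (f ` V) (mapE f E) (f ` S) = double_dominating V E S"
proof -
  have "card (cnbhd (f ` V) (mapE f E) (f a) \<inter> f ` S) = card (cnbhd V E a \<inter> S)" for a
    unfolding cnbhd_map[OF assms(1)] image_Int[OF assms(1), symmetric]
    using assms(1) by (simp add: card_image inj_on_subset)
  thus ?thesis unfolding double_dominating_def using assms by auto
qed

lemma dc_map: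
  assumes "inj f" "U \<subseteq> V" "W \<subseteq> V"
  shows "double_coalition (f ` V) (mapE f E) (f ` U) (f ` W) = double_coalition V E U W"
proof -
  have "f ` U \<union> f ` W = f ` (U \<union> W)" by auto
  moreover have "(f ` U \<inter> f ` W = {}) = (U \<inter> W = {})" using assms(1) by (auto dest: injD)
  moreover have "U \<union> W \<subseteq> V" using assms by auto
  ultimately show ?thesis unfolding double_coalition_def
    using dd_map[OF assms(1) assms(2)] dd_map[OF assms(1) assms(3)] dd_map[OF assms(1) \<open>U \<union> W \<subseteq> V\<close>] by simp
qed

lemma dcp_map:
  assumes "inj f" "dc_partition V E P"
  shows "dc_partition (f ` V) (mapE f E) ((`) f ` P)"
proof -
  from assms(2) have UP: "\<Union>P = V" and neP: "{} \<notin> P"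
    and disj: "\<forall>A\<in>P. \<forall>B\<in>P. A \<noteq> B \<longrightarrow> A \<inter> B = {}"
    and part: "\<forall>A\<in>P. \<exists>B\<in>P. B \<noteq> A \<and> double_coalition V E A B"
    unfolding dc_partition_def by blast+
  have sub: "\<And>B. B \<in> P \<Longrightarrow> B \<subseteq> V" using UP by blast
  have c1: "\<Union>((`) f ` P) = f ` V" using UP by blast
  have c2: "{} \<notin> (`) f ` P" using neP by blast
  have c3: "\<forall>A'\<in>(`) f ` P. \<forall>B'\<in>(`) f ` P. A' \<noteq> B' \<longrightarrow> A' \<inter> B' = {}"
  proof (intro ballI impI)
    fix A' B' assume "A' \<in> (`) f ` P" "B' \<in> (`) f ` P" "A' \<noteq> B'"
    then obtain A B where "A \<in> P" "B \<in> P" "A' = f ` A" "B' = f ` B" "A \<noteq> B" by blast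
    hence "A \<inter> B = {}" using disj by blast
    thus "A' \<inter> B' = {}" using \<open>A' = f ` A\<close> \<open>B' = f ` B\<close> image_Int[OF assms(1), of A B] by simp
  qed
  have c4: "\<forall>A'\<in>(`) f ` P. \<exists>B'\<in>(`) f ` P. B' \<noteq> A' \<and> double_coalition (f ` V) (mapE f E) A' B'"
  proof
    fix A' assume "A' \<in> (`) f ` P"
    then obtain A where A: "A \<in> P" "A' = f ` A" by blast
    then obtain B where B: "B \<in> P" "B \<noteq> A" "double_coalition V E A B"
      using part by blast
    have "f ` B \<noteq> f ` A" using B(2) assms(1) by (simp add: inj_image_eq_iff)
    moreover have "double_coalition (f ` V) (mapE f E) (f ` A) (f ` B)"
      using dc_map[OF assms(1) sub[OF A(1)] sub[OF B(1)]] B(3) by simp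
    moreover have "f ` B \<in> (`) f ` P" using B(1) by blast
    ultimately show "\<exists>B'\<in>(`) f ` P. B' \<noteq> A' \<and> double_coalition (f ` V) (mapE f E) A' B'"
      using A(2) by blast
  qed
  show ?thesis unfolding dc_partition_def using c1 c2 c3 c4 by blast
qed

lemma card_map_partition: "inj f \<Longrightarrow> card ((`) f ` P) = card P"
proof -
  assume "inj f"
  hence "inj_on ((`) f) P" using inj_image_eq_iff[of f] unfolding inj_on_def by blast
  thus ?thesis by (simp add: card_image)
qed

lemma rtc_map:
  assumes "E\<^sup>*\<^sup>* a b" shows "(mapE f E)\<^sup>*\<^sup>* (f a) (f b)"
  using assms
proof (induction rule: rtranclp_induct)
  case base thus ?case by simp
next
  case (step y z)
  hence "mapE f E (f y) (f z)" unfolding mapE_def by auto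
  thus ?case using step.IH by (simp add: rtranclp.rtrancl_into_rtrancl)
qed

lemma graph_map:
  assumes inj: "inj f" and G: "graph V E"
  shows "graph (f ` V) (mapE f E)"
proof -
  have a1: "finite V" using G unfolding graph_def by (elim conjE) assumption
  have a2: "V \<noteq> {}" using G unfolding graph_def by (elim conjE) assumption
  have a3: "\<forall>x y. E x y \<longrightarrow> x \<in> V \<and> y \<in> V" using G unfolding graph_def by (elim conjE) assumption
  have a4: "\<forall>x y. E x y \<longrightarrow> E y x" using G unfolding graph_def by (elim conjE) assumption
  have a5: "\<forall>x. \<not> E x x" using G unfolding graph_def by (elim conjE) assumption
  have a6: "\<forall>x\<in>V. \<forall>y\<in>V. E\<^sup>*\<^sup>* x y" using G unfolding graph_def by (elim conjE) assumption
  have b3: "\<forall>x y. mapE f E x y \<longrightarrow> x \<in> f ` V \<and> y \<in> f ` V"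
    unfolding mapE_def using a3 by auto
  have b4: "\<forall>x y. mapE f E x y \<longrightarrow> mapE f E y x"
    unfolding mapE_def using a4 by metis
  have b5: "\<forall>x. \<not> mapE f E x x"
  proof
    fix x show "\<not> mapE f E x x"
    proof
      assume "mapE f E x x"
      then obtain a b where "x = f a" "x = f b" "E a b" unfolding mapE_def by blast
      hence "a = b" using inj by (metis injD)
      thus False using a5 \<open>E a b\<close> by blast
    qed
  qed
  have b6: "\<forall>x\<in>f ` V. \<forall>y\<in>f ` V. (mapE f E)\<^sup>*\<^sup>* x y"
  proof (intro ballI)
    fix x y assume "x \<in> f ` V" "y \<in> f ` V"
    then obtain a b where "a \<in> V" "b \<in> V" "x = f a" "y = f b" by blast
    hence "E\<^sup>*\<^sup>* a b" using a6 by simp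
    thus "(mapE f E)\<^sup>*\<^sup>* x y" using rtc_map[of E a b f] \<open>x = f a\<close> \<open>y = f b\<close> by simp
  qed
  show ?thesis unfolding graph_def using a1 a2 b3 b4 b5 b6 by (intro conjI) auto
qed



datatype vtx = W nat | Y nat nat | H nat nat nat | Z nat nat nat

instance vtx :: countable by countable_datatype

fun inV :: "nat \<Rightarrow> nat \<Rightarrow> vtx \<Rightarrow> bool" where
  "inV k n (W j) = (j<k)"
| "inV k n (Y j m) = (j<k \<and> m<n)"
| "inV k n (H j i e) = (j<k \<and> i<k \<and> i\<noteq>j \<and> e<2)"
| "inV k n (Z c j e) = (c<2 \<and> j<k \<and> e<2)"

definition VV :: "nat \<Rightarrow> nat \<Rightarrow> vtx set" where "VV k n = {x. inV k n x}"

fun adj0 :: "nat \<Rightarrow> nat \<Rightarrow> vtx \<Rightarrow> vtx \<Rightarrow> bool" where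
  "adj0 k n (W j) (Y j' m) = (j'=j \<and> j<k \<and> m<n)"
| "adj0 k n (W j) (H j' i e) = (j'=j \<and> inV k n (H j i e))"
| "adj0 k n (H j i e) (H j' i' e') = (j'=j \<and> inV k n (H j i e) \<and> inV k n (H j i' e') \<and> (i,e) \<noteq> (i',e'))"
| "adj0 k n (Y j m) (H j' i e) = (j'=j \<and> m<n \<and> inV k n (H j i e))"
| "adj0 k n (Y j m) (Z c j' e) = (j<k \<and> m<n \<and> ((c=0 \<and> j'=j \<and> e = (if m=0 then 1 else 0)) \<or> (c=1 \<and> j=0 \<and> m=0 \<and> j'=0 \<and> e=0)))"
| "adj0 k n (Z c j e) (Z c' j' e') = (c'=c \<and> inV k n (Z c j e) \<and> inV k n (Z c j' e') \<and> (j,e) \<noteq> (j',e'))"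
| "adj0 k n _ _ = False"

definition EE :: "nat \<Rightarrow> nat \<Rightarrow> vtx \<Rightarrow> vtx \<Rightarrow> bool" where
  "EE k n x y = (adj0 k n x y \<or> adj0 k n y x)"

definition Yset :: "nat \<Rightarrow> nat \<Rightarrow> vtx set" where "Yset n j = Y j ` {..<n}"
definition Hset :: "nat \<Rightarrow> nat \<Rightarrow> vtx set" where
  "Hset k j = (\<lambda>(i,e). H j i e) ` (({..<k}-{j}) \<times> {..<2})"
definition Zset :: "nat \<Rightarrow> nat \<Rightarrow> vtx set" where
  "Zset k c = (\<lambda>(j,e). Z c j e) ` ({..<k} \<times> {..<2})"

lemma mem_Yset[simp]: "x \<in> Yset n j \<longleftrightarrow> (\<exists>m. x = Y j m \<and> m < n)"
  unfolding Yset_def by auto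
lemma mem_Hset[simp]: "x \<in> Hset k j \<longleftrightarrow> (\<exists>i e. x = H j i e \<and> i < k \<and> i \<noteq> j \<and> e < 2)"
  unfolding Hset_def by force
lemma mem_Zset[simp]: "x \<in> Zset k c \<longleftrightarrow> (\<exists>j e. x = Z c j e \<and> j < k \<and> e < 2)"
  unfolding Zset_def by force

lemma card_Yset: "card (Yset n j) = n"
  unfolding Yset_def by (simp add: card_image inj_on_def)
lemma card_Hset: "j < k \<Longrightarrow> card (Hset k j) = 2 * (k - 1)"
proof -
  assume "j < k"
  have "inj_on (\<lambda>(i,e). H j i e) (({..<k}-{j}) \<times> {..<2::nat})" by (auto simp: inj_on_def)
  hence "card (Hset k j) = card (({..<k}-{j}) \<times> {..<2::nat})" unfolding Hset_def by (rule card_image)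
  also have "\<dots> = (k - 1) * 2" using \<open>j<k\<close> by (simp add: card_cartesian_product)
  finally show ?thesis by simp
qed
lemma card_Zset: "card (Zset k c) = 2 * k"
proof -
  have "inj_on (\<lambda>(j,e). Z c j e) ({..<k} \<times> {..<2::nat})" by (auto simp: inj_on_def)
  hence "card (Zset k c) = card ({..<k} \<times> {..<2::nat})" unfolding Zset_def by (rule card_image)
  thus ?thesis by (simp add: card_cartesian_product)
qed
lemma fin_sets[simp]: "finite (Yset n j)" "finite (Hset k j)" "finite (Zset k c)"
  unfolding Yset_def Hset_def Zset_def by auto

lemma finite_VV: "finite (VV k n)"
proof -
  have "VV k n \<subseteq> W ` {..<k} \<union> (\<Union>j<k. Yset n j) \<union> (\<Union>j<k. Hset k j) \<union> Zset k 0 \<union> Zset k 1"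
  proof
    fix x assume "x \<in> VV k n" thus "x \<in> W ` {..<k} \<union> (\<Union>j<k. Yset n j) \<union> (\<Union>j<k. Hset k j) \<union> Zset k 0 \<union> Zset k 1"
      by (cases x) (auto simp: VV_def less_2_cases_iff)
  qed
  thus ?thesis by (rule finite_subset) auto
qed

lemma in_cn: "a \<in> cnbhd V E z \<longleftrightarrow> a = z \<or> (a \<in> V \<and> E z a)"
  unfolding cnbhd_def nbhd_def by auto

lemma EE_V: "EE k n x y \<Longrightarrow> x \<in> VV k n \<and> y \<in> VV k n"
  unfolding EE_def VV_def by (cases x; cases y) auto

lemma EE_sym: "EE k n x y = EE k n y x" unfolding EE_def by auto

lemma EE_irr: "\<not> EE k n x x" unfolding EE_def by (cases x) auto



lemma nb_W: "j < k \<Longrightarrow> nbhd (VV k n) (EE k n) (W j) = Yset n j \<union> Hset k j"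
  apply (rule set_eqI)
  subgoal for x by (cases x) (auto simp: nbhd_def EE_def VV_def)
  done

lemma nb_H: "inV k n (H j i e) \<Longrightarrow> nbhd (VV k n) (EE k n) (H j i e) = insert (W j) (Yset n j \<union> (Hset k j - {H j i e}))"
  apply (rule set_eqI)
  subgoal for x by (cases x) (auto simp: nbhd_def EE_def VV_def)
  done

lemma nb_Y: "j < k \<Longrightarrow> m < n \<Longrightarrow> nbhd (VV k n) (EE k n) (Y j m) =
   insert (W j) (Hset k j \<union> {Z 0 j (if m=0 then 1 else 0)} \<union> (if j=0 \<and> m=0 then {Z 1 0 0} else {}))"
  apply (rule set_eqI)
  subgoal for x by (cases x) (auto simp: nbhd_def EE_def VV_def)
  done

lemma nb_Z_sub: "inV k n (Z c j e) \<Longrightarrow> nbhd (VV k n) (EE k n) (Z c j e) \<subseteq>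
   (Zset k c - {Z c j e}) \<union> Y j ` ({..<n} - {if c=0 \<and> e=0 then 0 else 1})"
  apply (rule subsetI)
  subgoal for x by (cases x) (auto simp: nbhd_def EE_def VV_def split: if_splits)
  done

lemma nb_Z_sup: "inV k n (Z c j e) \<Longrightarrow> Zset k c - {Z c j e} \<subseteq> nbhd (VV k n) (EE k n) (Z c j e)"
  by (auto simp: nbhd_def EE_def VV_def)

lemma nb_Z110: "1 < k \<Longrightarrow> nbhd (VV k n) (EE k n) (Z 1 1 0) = Zset k 1 - {Z 1 1 0}"
  apply (rule set_eqI)
  subgoal for x by (cases x) (auto simp: nbhd_def EE_def VV_def)
  done



lemma deg_W: "j < k \<Longrightarrow> degree (VV k n) (EE k n) (W j) = n + 2 * (k - 1)"
  unfolding degree_def nb_W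
  by (subst card_Un_disjoint) (auto simp: card_Yset card_Hset)

lemma deg_H: assumes "inV k n (H j i e)"
  shows "degree (VV k n) (EE k n) (H j i e) = n + 2 * (k - 1)"
proof -
  have hk: "H j i e \<in> Hset k j" "j < k" using assms by auto
  have "card (Hset k j - {H j i e}) = 2 * (k - 1) - 1" using hk card_Hset by simp
  moreover have "card (Yset n j \<union> (Hset k j - {H j i e})) = card (Yset n j) + card (Hset k j - {H j i e})"
    by (rule card_Un_disjoint) auto
  moreover have "2 * (k - 1) \<ge> 1" using hk by auto
  ultimately show ?thesis unfolding degree_def nb_H[OF assms]
    by (simp add: card_Yset)
qed

lemma deg_Y: assumes "j < k" "m < n"
  shows "2 * k - 1 \<le> degree (VV k n) (EE k n) (Y j m)" "degree (VV k n) (EE k n) (Y j m) \<le> 2 * k + 1"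
proof -
  define S where "S = insert (W j) (Hset k j \<union> {Z 0 j (if m=0 then 1 else 0)} \<union> (if j=0 \<and> m=0 then {Z 1 0 0} else {}))"
  have N: "nbhd (VV k n) (EE k n) (Y j m) = S" unfolding S_def using nb_Y[OF assms] .
  have fS: "finite S" unfolding S_def by auto
  have "insert (W j) (Hset k j) \<subseteq> S" unfolding S_def by auto
  hence "card (insert (W j) (Hset k j)) \<le> card S" using fS card_mono by blast
  moreover have "card (insert (W j) (Hset k j)) = 2 * (k - 1) + 1" using card_Hset[OF assms(1)] by simp
  moreover have "k \<ge> 1" using assms by simp
  ultimately show "2 * k - 1 \<le> degree (VV k n) (EE k n) (Y j m)" unfolding degree_def N by simp
  define T where "T = Hset k j \<union> {Z 0 j (if m=0 then 1 else 0), Z 1 0 0}"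
  have "S \<subseteq> insert (W j) T" unfolding S_def T_def by auto
  hence c1: "card S \<le> card (insert (W j) T)"
    by (intro card_mono) (auto simp: T_def)
  have c2: "card (insert (W j) T) \<le> Suc (card T)" by (rule card_insert_le_m1) (auto simp: T_def)
  have c3: "card T \<le> card (Hset k j) + card {Z 0 j (if m=0 then 1 else 0), Z 1 0 0}"
    unfolding T_def by (rule card_Un_le)
  have c4: "card {Z 0 j (if m=0 then 1 else 0), Z 1 0 0} \<le> 2" by (simp add: card_insert_if)
  have "card S \<le> Suc (2 * (k - 1) + 2)" using c1 c2 c3 c4 card_Hset[OF assms(1)] by linarith
  thus "degree (VV k n) (EE k n) (Y j m) \<le> 2 * k + 1" unfolding degree_def N using assms by simp
qed

lemma deg_Z: assumes "inV k n (Z c j e)" "2 \<le> n"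
  shows "2 * k - 1 \<le> degree (VV k n) (EE k n) (Z c j e)" "degree (VV k n) (EE k n) (Z c j e) \<le> (2 * k - 1) + (n - 1)"
proof -
  have zin: "Z c j e \<in> Zset k c" using assms by auto
  have cz: "card (Zset k c - {Z c j e}) = 2 * k - 1" using zin card_Zset by simp
  have fN: "finite (nbhd (VV k n) (EE k n) (Z c j e))" using finite_VV unfolding nbhd_def by auto
  show "2 * k - 1 \<le> degree (VV k n) (EE k n) (Z c j e)"
    unfolding degree_def using card_mono[OF fN nb_Z_sup[OF assms(1)]] cz by simp
  define q where "q = (if c=0 \<and> e=0 then 0 else (1::nat))"
  have q: "q < n" using assms(2) q_def by auto
  have "card (nbhd (VV k n) (EE k n) (Z c j e)) \<le> card ((Zset k c - {Z c j e}) \<union> Y j ` ({..<n} - {q}))"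
    by (rule card_mono) (use nb_Z_sub[OF assms(1)] q_def in auto)
  also have "\<dots> \<le> card (Zset k c - {Z c j e}) + card (Y j ` ({..<n} - {q}))" by (rule card_Un_le)
  also have "card (Y j ` ({..<n} - {q})) \<le> card ({..<n} - {q})" by (rule card_image_le) auto
  also have "card ({..<n} - {q}) = n - 1" using q by simp
  finally show "degree (VV k n) (EE k n) (Z c j e) \<le> (2 * k - 1) + (n - 1)" unfolding degree_def using cz by simp
qed

lemma deg_Z110: "1 < k \<Longrightarrow> degree (VV k n) (EE k n) (Z 1 1 0) = 2 * k - 1"
  unfolding degree_def nb_Z110 using card_Zset[of k 1] by simp

lemma deg_bounds: assumes "2 \<le> k" "2 * k - 1 \<le> n" "x \<in> VV k n"
  shows "2 * k - 1 \<le> degree (VV k n) (EE k n) x \<and> degree (VV k n) (EE k n) x \<le> n + 2 * k - 2"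
proof (cases x)
  case (W j) thus ?thesis using assms deg_W[of j k n] by (auto simp: VV_def)
next
  case (Y j m) thus ?thesis using assms deg_Y[of j k m n] by (auto simp: VV_def)
next
  case (H j i e) thus ?thesis using assms deg_H[of k n j i e] by (auto simp: VV_def)
next
  case (Z c j e)
  have "2 \<le> n" using assms by linarith
  thus ?thesis using Z assms deg_Z[of k n c j e] by (auto simp: VV_def)
qed

lemma W0_in: "0 < k \<Longrightarrow> W 0 \<in> VV k n" by (simp add: VV_def)

lemma min_deg_VV: assumes "2 \<le> k" "2 * k - 1 \<le> n"
  shows "min_deg (VV k n) (EE k n) = 2 * k - 1"
  unfolding min_deg_def
proof (rule Min_eqI)
  show "finite (degree (VV k n) (EE k n) ` VV k n)" using finite_VV by simp
  show "\<And>y. y \<in> degree (VV k n) (EE k n) ` VV k n \<Longrightarrow> 2 * k - 1 \<le> y" using deg_bounds[OF assms] by auto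
  have "Z 1 1 0 \<in> VV k n" using assms by (simp add: VV_def)
  thus "2 * k - 1 \<in> degree (VV k n) (EE k n) ` VV k n" using deg_Z110[of k n] assms by force
qed

lemma max_deg_VV: assumes "2 \<le> k" "2 * k - 1 \<le> n"
  shows "max_deg (VV k n) (EE k n) = n + 2 * k - 2"
  unfolding max_deg_def
proof (rule Max_eqI)
  show "finite (degree (VV k n) (EE k n) ` VV k n)" using finite_VV by simp
  show "\<And>y. y \<in> degree (VV k n) (EE k n) ` VV k n \<Longrightarrow> y \<le> n + 2 * k - 2" using deg_bounds[OF assms] by auto
  have "W 0 \<in> VV k n" using assms by (simp add: VV_def)
  moreover have "degree (VV k n) (EE k n) (W 0) = n + 2 * k - 2" using deg_W[of 0 k n] assms by simp
  ultimately show "n + 2 * k - 2 \<in> degree (VV k n) (EE k n) ` VV k n" by force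
qed



lemma step: "EE k n a b \<Longrightarrow> (EE k n)\<^sup>*\<^sup>* b c \<Longrightarrow> (EE k n)\<^sup>*\<^sup>* a c"
  by (rule converse_rtranclp_into_rtranclp)

lemma reach_Z001: "0 < k \<Longrightarrow> 0 < n \<Longrightarrow> (EE k n)\<^sup>*\<^sup>* (Z 0 0 1) (W 0)"
  apply (rule step[of _ _ _ "Y 0 0"]) apply (simp add: EE_def)
  apply (rule step[of _ _ _ "W 0"]) apply (simp add: EE_def)
  by simp

lemma reach_Z0: "0 < n \<Longrightarrow> inV k n (Z 0 j e) \<Longrightarrow> (EE k n)\<^sup>*\<^sup>* (Z 0 j e) (W 0)"
proof (cases "(j,e) = (0,1)")
  case True thus "0 < n \<Longrightarrow> inV k n (Z 0 j e) \<Longrightarrow> ?thesis" using reach_Z001[of k n] by auto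
next
  case False
  assume a: "0 < n" "inV k n (Z 0 j e)"
  show ?thesis
    apply (rule step[of _ _ _ "Z 0 0 1"]) using a False apply (auto simp: EE_def)[1]
    using reach_Z001[of k n] a by simp
qed

lemma reach_Z1: "0 < n \<Longrightarrow> inV k n (Z 1 j e) \<Longrightarrow> (EE k n)\<^sup>*\<^sup>* (Z 1 j e) (W 0)"
proof -
  assume a: "0 < n" "inV k n (Z 1 j e)"
  have r: "(EE k n)\<^sup>*\<^sup>* (Z 1 0 0) (W 0)"
    apply (rule step[of _ _ _ "Y 0 0"]) using a apply (simp add: EE_def)
    apply (rule step[of _ _ _ "W 0"]) using a apply (simp add: EE_def)
    by simp
  show ?thesis
  proof (cases "(j,e) = (0,0)")
    case True thus ?thesis using r by auto
  next
    case False
    show ?thesis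
      apply (rule step[of _ _ _ "Z 1 0 0"]) using a False apply (auto simp: EE_def)[1]
      using r by simp
  qed
qed

lemma reach_W: "0 < n \<Longrightarrow> j < k \<Longrightarrow> (EE k n)\<^sup>*\<^sup>* (W j) (W 0)"
  apply (rule step[of _ _ _ "Y j 0"]) apply (simp add: EE_def)
  apply (rule step[of _ _ _ "Z 0 j 1"]) apply (simp add: EE_def)
  apply (rule reach_Z0) by auto

lemma reach_all: "0 < n \<Longrightarrow> x \<in> VV k n \<Longrightarrow> (EE k n)\<^sup>*\<^sup>* x (W 0)"
proof (cases x)
  case (W j) thus "0 < n \<Longrightarrow> x \<in> VV k n \<Longrightarrow> ?thesis" using reach_W by (auto simp: VV_def)
next
  case (Y j m)
  show "0 < n \<Longrightarrow> x \<in> VV k n \<Longrightarrow> ?thesis"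
    unfolding Y apply (rule step[of _ _ _ "W j"]) apply (simp add: EE_def VV_def)
    using reach_W by (auto simp: VV_def)
next
  case (H j i e)
  show "0 < n \<Longrightarrow> x \<in> VV k n \<Longrightarrow> ?thesis"
    unfolding H apply (rule step[of _ _ _ "W j"]) apply (simp add: EE_def VV_def)
    using reach_W by (auto simp: VV_def)
next
  case (Z c j e)
  show "0 < n \<Longrightarrow> x \<in> VV k n \<Longrightarrow> ?thesis"
    unfolding Z using reach_Z0[of n k j e] reach_Z1[of n k j e] by (auto simp: VV_def less_2_cases_iff)
qed

lemma graph_VV: assumes "0 < k" "0 < n" shows "graph (VV k n) (EE k n)"
proof -
  have sym: "symp (EE k n)" unfolding symp_def using EE_sym by blast
  have symr: "symp (EE k n)\<^sup>*\<^sup>*" using symp_rtranclp[OF sym] .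
  have conn: "\<forall>x\<in>VV k n. \<forall>y\<in>VV k n. (EE k n)\<^sup>*\<^sup>* x y"
  proof (intro ballI)
    fix x y assume "x \<in> VV k n" "y \<in> VV k n"
    hence "(EE k n)\<^sup>*\<^sup>* x (W 0)" "(EE k n)\<^sup>*\<^sup>* y (W 0)" using reach_all assms by auto
    hence "(EE k n)\<^sup>*\<^sup>* (W 0) y" using symr by (meson sympD)
    with \<open>(EE k n)\<^sup>*\<^sup>* x (W 0)\<close> show "(EE k n)\<^sup>*\<^sup>* x y" by (rule rtranclp_trans)
  qed
  have "VV k n \<noteq> {}" using W0_in[OF assms(1)] by auto
  moreover have "\<forall>x y. EE k n x y \<longrightarrow> x \<in> VV k n \<and> y \<in> VV k n" using EE_V by blast
  moreover have "\<forall>x y. EE k n x y \<longrightarrow> EE k n y x" using EE_sym by blast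
  moreover have "\<forall>x. \<not> EE k n x x" using EE_irr by blast
  ultimately show ?thesis unfolding graph_def using finite_VV conn by (intro conjI) auto
qed



fun isY :: "vtx \<Rightarrow> bool" where "isY (Y _ _) = True" | "isY _ = False"
fun col :: "vtx \<Rightarrow> nat" where
  "col (W j) = j" | "col (H j i e) = i" | "col (Z c j e) = j" | "col (Y j m) = j"

definition XX :: "nat \<Rightarrow> nat \<Rightarrow> nat \<Rightarrow> vtx set" where
  "XX k n i = {x \<in> VV k n. \<not> isY x \<and> col x = i}"

definition PP :: "nat \<Rightarrow> nat \<Rightarrow> vtx set set" where
  "PP k n = XX k n ` {..<k} \<union> (\<lambda>(j,m). {Y j m}) ` ({..<k} \<times> {..<n})"

lemma dd_pair: assumes "i < k" "m < n" "2 \<le> k"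
  shows "double_dominating (VV k n) (EE k n) (XX k n i \<union> {Y i m})"
  unfolding double_dominating_def
proof (intro conjI ballI)
  show "XX k n i \<union> {Y i m} \<subseteq> VV k n" using assms by (auto simp: XX_def VV_def)
  fix z assume z: "z \<in> VV k n"
  define S where "S = cnbhd (VV k n) (EE k n) z \<inter> (XX k n i \<union> {Y i m})"
  have fS: "finite S" unfolding S_def cnbhd_def nbhd_def using finite_VV by auto
  have memS: "a \<in> S \<longleftrightarrow> (a = z \<or> (a \<in> VV k n \<and> EE k n z a)) \<and> (a \<in> XX k n i \<or> a = Y i m)" for a
    by (simp only: S_def Int_iff in_cn Un_iff singleton_iff)
  have "2 \<le> card S"
  proof (cases z)
    case (W j)
    show ?thesis
    proof (cases "j = i")
      case True thus ?thesis using W z assms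
        by (intro two_le_cardI[OF fS, of "W i" "Y i m"]) (auto simp: memS EE_def VV_def XX_def)
    next
      case False thus ?thesis using W z assms
        by (intro two_le_cardI[OF fS, of "H j i 0" "H j i 1"]) (auto simp: memS EE_def VV_def XX_def)
    qed
  next
    case (H j i' e)
    show ?thesis
    proof (cases "i' = i")
      case True thus ?thesis using H z assms
        by (intro two_le_cardI[OF fS, of "H j i e" "H j i (1-e)"]) (auto simp: memS EE_def VV_def XX_def less_2_cases_iff)
    next
      case False
      show ?thesis
      proof (cases "j = i")
        case True thus ?thesis using H z assms False
          by (intro two_le_cardI[OF fS, of "W i" "Y i m"]) (auto simp: memS EE_def VV_def XX_def)
      next
        case False2: False
        thus ?thesis using H z assms False
          by (intro two_le_cardI[OF fS, of "H j i 0" "H j i 1"]) (auto simp: memS EE_def VV_def XX_def)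
      qed
    qed
  next
    case (Y j m')
    show ?thesis
    proof (cases "j = i")
      case True thus ?thesis using Y z assms
        by (intro two_le_cardI[OF fS, of "W i" "Z 0 i (if m'=0 then 1 else 0)"]) (auto simp: memS EE_def VV_def XX_def)
    next
      case False thus ?thesis using Y z assms
        by (intro two_le_cardI[OF fS, of "H j i 0" "H j i 1"]) (auto simp: memS EE_def VV_def XX_def)
    qed
  next
    case (Z c j e)
    show ?thesis
    proof (cases "j = i")
      case True thus ?thesis using Z z assms
        by (intro two_le_cardI[OF fS, of "Z c i e" "Z c i (1-e)"]) (auto simp: memS EE_def VV_def XX_def less_2_cases_iff)
    next
      case False thus ?thesis using Z z assms
        by (intro two_le_cardI[OF fS, of "Z c i 0" "Z c i 1"]) (auto simp: memS EE_def VV_def XX_def)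
    qed
  qed
  thus "2 \<le> card (cnbhd (VV k n) (EE k n) z \<inter> (XX k n i \<union> {Y i m}))" unfolding S_def .
qed

lemma not_dd_X: assumes "i < k"
  shows "\<not> double_dominating (VV k n) (EE k n) (XX k n i)"
proof
  assume dd: "double_dominating (VV k n) (EE k n) (XX k n i)"
  have "W i \<in> VV k n" using assms by (simp add: VV_def)
  hence c: "2 \<le> card (cnbhd (VV k n) (EE k n) (W i) \<inter> XX k n i)" using dd unfolding double_dominating_def by blast
  have "cnbhd (VV k n) (EE k n) (W i) \<inter> XX k n i \<subseteq> {W i}"
  proof
    fix a assume "a \<in> cnbhd (VV k n) (EE k n) (W i) \<inter> XX k n i"
    hence "a = W i \<or> (a \<in> VV k n \<and> EE k n (W i) a)" "a \<in> XX k n i" by (simp_all add: in_cn)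
    thus "a \<in> {W i}" by (cases a) (auto simp: EE_def XX_def VV_def)
  qed
  hence "card (cnbhd (VV k n) (EE k n) (W i) \<inter> XX k n i) \<le> 1"
    using card_mono[of "{W i}"] by fastforce
  thus False using c by simp
qed

lemma not_dd_Y: assumes "0 < k"
  shows "\<not> double_dominating (VV k n) (EE k n) {y}"
proof
  assume dd: "double_dominating (VV k n) (EE k n) {y}"
  have "W 0 \<in> VV k n" using assms by (simp add: VV_def)
  hence c: "2 \<le> card (cnbhd (VV k n) (EE k n) (W 0) \<inter> {y})" using dd unfolding double_dominating_def by blast
  have "card (cnbhd (VV k n) (EE k n) (W 0) \<inter> {y}) \<le> 1"
    using card_mono[of "{y}"] by fastforce
  thus False using c by simp
qed

lemma coal1: assumes "i < k" "m < n" "2 \<le> k"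
  shows "double_coalition (VV k n) (EE k n) (XX k n i) {Y i m}"
  unfolding double_coalition_def using not_dd_X[OF assms(1)] not_dd_Y[of k] dd_pair[OF assms] assms
  by (auto simp: XX_def)

lemma coal2: assumes "i < k" "m < n" "2 \<le> k"
  shows "double_coalition (VV k n) (EE k n) {Y i m} (XX k n i)"
  using coal1[OF assms] unfolding double_coalition_def by (auto simp: Un_commute)

lemma W_in_XX: "i < k \<Longrightarrow> W i \<in> XX k n i" by (simp add: XX_def VV_def)

lemma dcp_PP: assumes "2 \<le> k" "0 < n"
  shows "dc_partition (VV k n) (EE k n) (PP k n)"
  unfolding dc_partition_def
proof (intro conjI)
  show "\<Union>(PP k n) = VV k n"
  proof
    show "\<Union>(PP k n) \<subseteq> VV k n" unfolding PP_def XX_def by (auto simp: VV_def)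
    show "VV k n \<subseteq> \<Union>(PP k n)"
    proof
      fix x assume x: "x \<in> VV k n"
      show "x \<in> \<Union>(PP k n)"
      proof (cases "isY x")
        case True
        then obtain j m where "x = Y j m" by (cases x) auto
        thus ?thesis using x unfolding PP_def by (force simp: VV_def)
      next
        case False
        have "col x < k" using x by (cases x) (auto simp: VV_def)
        moreover have "x \<in> XX k n (col x)" using x False by (simp add: XX_def)
        ultimately show ?thesis unfolding PP_def by blast
      qed
    qed
  qed
  show "{} \<notin> PP k n" unfolding PP_def using W_in_XX by fastforce
  show "\<forall>A\<in>PP k n. \<forall>B\<in>PP k n. A \<noteq> B \<longrightarrow> A \<inter> B = {}"
    unfolding PP_def XX_def by auto
  show "\<forall>A\<in>PP k n. \<exists>B\<in>PP k n. B \<noteq> A \<and> double_coalition (VV k n) (EE k n) A B"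
  proof
    fix A assume "A \<in> PP k n"
    then consider (X) i where "i < k" "A = XX k n i" | (S) j m where "j < k" "m < n" "A = {Y j m}"
      unfolding PP_def by auto
    thus "\<exists>B\<in>PP k n. B \<noteq> A \<and> double_coalition (VV k n) (EE k n) A B"
    proof cases
      case X
      have "{Y i 0} \<in> PP k n" using X assms unfolding PP_def by auto
      moreover have "{Y i 0} \<noteq> A" using X W_in_XX[of i k n] by auto
      ultimately show ?thesis using coal1[OF X(1) assms(2) assms(1)] X by blast
    next
      case S
      have "XX k n j \<in> PP k n" using S unfolding PP_def by auto
      moreover have "XX k n j \<noteq> A" using S W_in_XX[of j k n] by auto
      ultimately show ?thesis using coal2[OF S(1) S(2) assms(1)] S by blast
    qed
  qed
qed

lemma card_PP: "card (PP k n) = k + k * n"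
proof -
  have i1: "inj_on (XX k n) {..<k}"
  proof (rule inj_onI)
    fix i i' assume "i \<in> {..<k}" "i' \<in> {..<k}" "XX k n i = XX k n i'"
    hence "W i \<in> XX k n i'" using W_in_XX[of i k n] by auto
    thus "i = i'" by (simp add: XX_def)
  qed
  have i2: "inj_on (\<lambda>(j,m). {Y j m}) ({..<k} \<times> {..<n})" by (auto simp: inj_on_def)
  have c1: "card (XX k n ` {..<k}) = k" using card_image[OF i1] by simp
  have c2: "card ((\<lambda>(j,m). {Y j m}) ` ({..<k} \<times> {..<n})) = k * n"
    using card_image[OF i2] by (simp add: card_cartesian_product)
  have dj: "XX k n ` {..<k} \<inter> (\<lambda>(j,m). {Y j m}) ` ({..<k} \<times> {..<n}) = {}"
    using W_in_XX by fastforce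
  show ?thesis unfolding PP_def using c1 c2 dj by (subst card_Un_disjoint) auto
qed



theorem theorem4p1:
  shows "(\<forall>(V::'a set) E. graph V E \<and> min_deg V E \<ge> 1 \<and>
             max_deg V E + 3 \<ge> 4 * ((min_deg V E + 1) div 2) \<longrightarrow>
             DC V E \<le> dc_bound (min_deg V E) (max_deg V E)) \<and>
         (\<forall>d::nat. odd d \<and> d \<ge> 3 \<longrightarrow>
            (\<exists>(V::nat set) E. graph V E \<and> min_deg V E = d \<and>
               max_deg V E + 3 \<ge> 4 * ((d + 1) div 2) \<and>
               DC V E = dc_bound d (max_deg V E)))"
proof (intro conjI allI impI)
  fix V :: "'a set" and E
  assume h: "graph V E \<and> min_deg V E \<ge> 1 \<and> max_deg V E + 3 \<ge> 4 * ((min_deg V E + 1) div 2)"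
  show "DC V E \<le> dc_bound (min_deg V E) (max_deg V E)"
  proof (rule DC_le)
    fix P assume "dc_partition V E P"
    thus "card P \<le> dc_bound (min_deg V E) (max_deg V E)" using part1[of V E P] h by simp
  qed
next
  fix d :: nat assume hd: "odd d \<and> d \<ge> 3"
  define k where "k = (d + 1) div 2"
  define n where "n = d"
  have dk: "d = 2 * k - 1" "2 \<le> k" using hd unfolding k_def by (auto elim: oddE)
  have kn: "2 * k - 1 \<le> n" "0 < n" using dk n_def by auto
  define V' where "V' = to_nat ` VV k n"
  define E' where "E' = mapE (to_nat :: vtx \<Rightarrow> nat) (EE k n)"
  have inj: "inj (to_nat :: vtx \<Rightarrow> nat)" by simp
  have g: "graph V' E'" unfolding V'_def E'_def
    using graph_map[OF inj graph_VV] dk kn by simp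
  have mi: "min_deg V' E' = d" unfolding V'_def E'_def
    using min_deg_map[OF inj] min_deg_VV[OF dk(2) kn(1)] dk by simp
  have ma: "max_deg V' E' = n + 2 * k - 2" unfolding V'_def E'_def
    using max_deg_map[OF inj] max_deg_VV[OF dk(2) kn(1)] by simp
  have cond: "max_deg V' E' + 3 \<ge> 4 * ((d + 1) div 2)"
  proof -
    have "(d + 1) div 2 = k" using k_def by simp
    moreover have "max_deg V' E' + 3 \<ge> 4 * k" using ma dk(2) kn(1) by linarith
    ultimately show ?thesis by simp
  qed
  have bnd: "dc_bound d (max_deg V' E') = k + k * n"
  proof -
    have "(d + 1) div 2 = k" using k_def by simp
    moreover have "max_deg V' E' + 2 - 2 * k = n" using ma dk by simp
    moreover have "d div 2 = k - 1" using dk(1) dk(2) by presburger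
    ultimately show ?thesis unfolding dc_bound_def using dk(2) by (simp add: algebra_simps)
  qed
  have le: "DC V' E' \<le> dc_bound d (max_deg V' E')"
  proof (rule DC_le)
    fix P assume "dc_partition V' E' P"
    thus "card P \<le> dc_bound d (max_deg V' E')" using part1[OF g _ \<open>dc_partition V' E' P\<close>] mi cond by simp
  qed
  have "dc_partition V' E' ((`) to_nat ` PP k n)"
    unfolding V'_def E'_def by (rule dcp_map[OF inj dcp_PP[OF dk(2) kn(2)]])
  moreover have "finite V'" using g unfolding graph_def by (elim conjE)
  ultimately have "card ((`) to_nat ` PP k n) \<le> DC V' E'"
    using DC_ge by blast
  hence ge: "k + k * n \<le> DC V' E'" using card_map_partition[OF inj] card_PP by simp
  show "\<exists>(V::nat set) E. graph V E \<and> min_deg V E = d \<and>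
               max_deg V E + 3 \<ge> 4 * ((d + 1) div 2) \<and>
               DC V E = dc_bound d (max_deg V E)"
    using g mi cond le ge bnd by (intro exI[of _ V'] exI[of _ E']) simp
qed


end
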